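(* Let $\mathcal O^\vee_q$ be the algebra defined in the context, with degrees and subspaces $\mathcal O^\vee_d$ as defined there. For every $d\in\mathbb N$, the subspace $\mathcal O^\vee_d$ is spanned by the products $a_1a_2\cdots a_n$ of essential generators such that both (i) $n\in\mathbb N$ and $\sum_{i=1}^n\deg(a_i)\le d$; and (ii) for $2\le i\le n$, $\deg(a_i)=1$ implies $\deg(a_{i-1})=1$.
   Context: All algebras are associative and unital over a field $\mathbb F$; $q\in\mathbb F$ is nonzero and not a root of unity. For elements $X,Y$ of an algebra, $[X,Y]=XY-YX$ and $[X,Y]_q=qXY-q^{-1}YX$. The algebra $\mathcal O^\vee_q$ is defined by generators (called essential generators) $\mathcal W_0,\mathcal W_1,\{\tilde{\mathcal G}_{k+1}\}_{k\in\mathbb N}$ and relations: $[\mathcal W_0,[\mathcal W_0,[\mathcal W_0,\mathcal W_1]_q]_{q^{-1}}]=(q^2-q^{-2})^2[\mathcal W_1,\mathcal W_0]$; $[\mathcal W_1,[\mathcal W_1,[\mathcal W_1,\mathcal W_0]_q]_{q^{-1}}]=(q^2-q^{-2})^2[\mathcal W_0,\mathcal W_1]$; $[\mathcal W_0,\tilde{\mathcal G}_1]=[\mathcal W_0,[\mathcal W_0,\mathcal W_1]_q]$; $[\tilde{\mathcal G}_1,\mathcal W_1]=[[\mathcal W_0,\mathcal W_1]_q,\mathcal W_1]$; for $k\ge1$: $[\tilde{\mathcal G}_{k+1},\mathcal W_0]=(q^2-q^{-2})^{-2}[\mathcal W_0,[\mathcal W_0,[\mathcal W_1,\tilde{\mathcal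 G}_k]_q]_q]$; for $k\ge1$: $[\mathcal W_1,\tilde{\mathcal G}_{k+1}]=(q^2-q^{-2})^{-2}[[[\tilde{\mathcal G}_k,\mathcal W_0]_q,\mathcal W_1]_q,\mathcal W_1]$; for $k,\ell\in\mathbb N$: $[\tilde{\mathcal G}_{k+1},\tilde{\mathcal G}_{\ell+1}]=0$. Assign degrees $\deg\mathcal W_0=\deg\mathcal W_1=1$ and $\deg\tilde{\mathcal G}_{k+1}=2k+2$ ($k\in\mathbb N$). For $d\in\mathbb N$, $\mathcal O^\vee_d$ is the subspace of $\mathcal O^\vee_q$ spanned by the products $a_1\cdots a_n$ ($n\in\mathbb N$, empty product $=1$) of essential generators with $\sum_i\deg(a_i)\le d$. *)

theory Defs
  imports Main "HOL-Library.Function_Algebras"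
begin

text \<open>Essential generators: W0, W1 and Gt k standing for the generator G~_{k+1} (k in N).\<close>
datatype gen = W0 | W1 | Gt nat

fun deg :: "gen \<Rightarrow> nat" where
  "deg W0 = 1" | "deg W1 = 1" | "deg (Gt k) = 2 * k + 2"

definition deg_word :: "gen list \<Rightarrow> nat" where
  "deg_word w = sum_list (map deg w)"

text \<open>Condition (ii): for 2 <= i <= n, deg a_i = 1 implies deg a_{i-1} = 1 (0-based indices here).\<close>
definition good :: "gen list \<Rightarrow> bool" where
  "good w \<longleftrightarrow> (\<forall>i. 1 \<le> i \<and> i < length w \<and> deg (w ! i) = 1 \<longrightarrow> deg (w ! (i - 1)) = 1)"

text \<open>The free algebra on the essential generators: elements are coefficient functions on
  words (only finitely supported ones arise below); words are the basis elements.\<close>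
definition word :: "gen list \<Rightarrow> gen list \<Rightarrow> 'a::field" where
  "word w = (\<lambda>u. if u = w then 1 else 0)"

definition fmul :: "(gen list \<Rightarrow> 'a::field) \<Rightarrow> (gen list \<Rightarrow> 'a) \<Rightarrow> gen list \<Rightarrow> 'a" where
  "fmul p r = (\<lambda>w. \<Sum>i\<le>length w. p (take i w) * r (drop i w))"

definition smul :: "'a::field \<Rightarrow> (gen list \<Rightarrow> 'a) \<Rightarrow> gen list \<Rightarrow> 'a" where
  "smul c p = (\<lambda>w. c * p w)"

definition comm :: "(gen list \<Rightarrow> 'a::field) \<Rightarrow> (gen list \<Rightarrow> 'a) \<Rightarrow> gen list \<Rightarrow> 'a" where
  "comm x y = fmul x y - fmul y x"

definition qcomm :: "'a::field \<Rightarrow> (gen list \<Rightarrow> 'a) \<Rightarrow> (gen list \<Rightarrow> 'a) \<Rightarrow> gen list \<Rightarrow> 'a" where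
  "qcomm q x y = smul q (fmul x y) - smul (inverse q) (fmul y x)"

definition gW0 :: "gen list \<Rightarrow> 'a::field" where "gW0 = word [W0]"
definition gW1 :: "gen list \<Rightarrow> 'a::field" where "gW1 = word [W1]"
definition gG :: "nat \<Rightarrow> gen list \<Rightarrow> 'a::field" where "gG k = word [Gt k]"

text \<open>Relators (each "lhs - rhs") of O^vee_q.\<close>
inductive relator :: "'a::field \<Rightarrow> (gen list \<Rightarrow> 'a) \<Rightarrow> bool" for q where
  r1: "relator q (comm gW0 (qcomm (inverse q) gW0 (qcomm q gW0 gW1))
          - smul ((q^2 - inverse q ^ 2)^2) (comm gW1 gW0))"
| r2: "relator q (comm gW1 (qcomm (inverse q) gW1 (qcomm q gW1 gW0))
          - smul ((q^2 - inverse q ^ 2)^2) (comm gW0 gW1))"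
| r3: "relator q (comm gW0 (gG 0) - comm gW0 (qcomm q gW0 gW1))"
| r4: "relator q (comm (gG 0) gW1 - comm (qcomm q gW0 gW1) gW1)"
| r5: "k \<ge> 1 \<Longrightarrow> relator q (comm (gG k) gW0
          - smul (inverse ((q^2 - inverse q ^ 2)^2)) (comm gW0 (qcomm q gW0 (qcomm q gW1 (gG (k - 1))))))"
| r6: "k \<ge> 1 \<Longrightarrow> relator q (comm gW1 (gG k)
          - smul (inverse ((q^2 - inverse q ^ 2)^2)) (comm (qcomm q (qcomm q (gG (k - 1)) gW0) gW1) gW1))"
| r7: "relator q (comm (gG k) (gG l))"

inductive_set rel_ideal :: "'a::field \<Rightarrow> (gen list \<Rightarrow> 'a) set" for q where
  gen: "relator q r \<Longrightarrow> r \<in> rel_ideal q"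
| zero: "0 \<in> rel_ideal q"
| add: "x \<in> rel_ideal q \<Longrightarrow> y \<in> rel_ideal q \<Longrightarrow> x + y \<in> rel_ideal q"
| scale: "x \<in> rel_ideal q \<Longrightarrow> smul c x \<in> rel_ideal q"
| lmul: "x \<in> rel_ideal q \<Longrightarrow> fmul (word u) x \<in> rel_ideal q"
| rmul: "x \<in> rel_ideal q \<Longrightarrow> fmul x (word u) \<in> rel_ideal q"

definition word_span :: "gen list set \<Rightarrow> (gen list \<Rightarrow> 'a::field) set" where
  "word_span S = {x. \<exists>T c. finite T \<and> T \<subseteq> S \<and> x = (\<lambda>u. \<Sum>w\<in>T. c w * word w u)}"

text \<open>Preimage in the free algebra of the subspace of O^vee_q spanned by the words in S.\<close>
definition span_mod :: "'a::field \<Rightarrow> gen list set \<Rightarrow> (gen list \<Rightarrow> 'a) set" where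
  "span_mod q S = {x. \<exists>y\<in>word_span S. x - y \<in> rel_ideal q}"

end

theory Submission
  imports Defs
begin

lemma fmul_word_word: "fmul (word a) (word b) = (word (a @ b) :: gen list \<Rightarrow> 'a::field)"
proof
  fix w :: "gen list"
  have eq: "take i w = a \<and> drop i w = b \<longleftrightarrow> i = length a \<and> w = a @ b" if "i \<le> length w" for i
  proof
    assume h: "take i w = a \<and> drop i w = b"
    then have "w = a @ b" by (metis append_take_drop_id)
    moreover have "length a = i" using h that by auto
    ultimately show "i = length a \<and> w = a @ b" by simp
  qed auto
  have "fmul (word a) (word b) w = (\<Sum>i\<le>length w. (if i = length a \<and> w = a @ b then 1 else 0 :: 'a))"
    unfolding fmul_def word_def
    by (rule sum.cong) (use eq in auto)
  also have "\<dots> = word (a @ b) w"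
    by (cases "w = a @ b") (auto simp: word_def)
  finally show "fmul (word a) (word b) w = (word (a @ b) w :: 'a)" .
qed

lemma fmul_add_left: "fmul (x + y) z = fmul x z + fmul y z"
  unfolding fmul_def by (auto simp: distrib_right sum.distrib)

lemma fmul_add_right: "fmul x (y + z) = fmul x y + fmul x z"
  unfolding fmul_def by (auto simp: distrib_left sum.distrib)

lemma fmul_smul_left: "fmul (smul c x) z = smul c (fmul x z)"
  unfolding fmul_def smul_def by (auto simp: sum_distrib_left mult.assoc)

lemma fmul_smul_right: "fmul x (smul c z) = smul c (fmul x z)"
  unfolding fmul_def smul_def by (auto simp: sum_distrib_left mult_ac)

lemma fmul_zero_left: "fmul 0 z = 0"
  unfolding fmul_def by auto

lemma fmul_zero_right: "fmul x 0 = 0"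
  unfolding fmul_def by auto

lemma minus_smul: "x - y = x + smul (-1) y"
  unfolding smul_def by auto

lemma smul_add: "smul c (x + y) = smul c x + smul c y"
  unfolding smul_def by (auto simp: distrib_left)

inductive_set lin :: "gen list set \<Rightarrow> (gen list \<Rightarrow> 'a::field) set" for S where
  lz: "0 \<in> lin S"
| lw: "s \<in> S \<Longrightarrow> word s \<in> lin S"
| la: "x \<in> lin S \<Longrightarrow> y \<in> lin S \<Longrightarrow> x + y \<in> lin S"
| ls: "x \<in> lin S \<Longrightarrow> smul c x \<in> lin S"

lemma lin_mono: "x \<in> lin A \<Longrightarrow> A \<subseteq> B \<Longrightarrow> x \<in> lin B"
  by (induction rule: lin.induct) (auto intro: lin.intros)

lemma lin_minus: "x \<in> lin S \<Longrightarrow> y \<in> lin S \<Longrightarrow> x - y \<in> lin S"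
  unfolding minus_smul by (auto intro: lin.intros)

lemma lin_fmul:
  assumes "x \<in> lin A" "y \<in> lin B"
  shows "fmul x y \<in> lin {a @ b | a b. a \<in> A \<and> b \<in> B}"
  using assms(1)
proof (induction rule: lin.induct)
  case lz
  have eq: "fmul 0 y = (0 :: gen list \<Rightarrow> 'a)" by (rule fmul_zero_left)
  show ?case by (subst eq) (rule lin.lz)
next
  case (lw s)
  from assms(2) show ?case
  proof (induction rule: lin.induct)
    case lz
    have eq: "fmul (word s) 0 = (0 :: gen list \<Rightarrow> 'a)" by (rule fmul_zero_right)
    show ?case by (subst eq) (rule lin.lz)
  next
    case (lw t) then show ?case using \<open>s \<in> A\<close> by (auto simp: fmul_word_word intro!: lin.lw)
  next
    case (la x y) show ?case by (subst fmul_add_right) (rule lin.la; fact)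
  next
    case (ls x c) show ?case by (subst fmul_smul_right) (rule lin.ls; fact)
  qed
next
  case (la x y) show ?case by (subst fmul_add_left) (rule lin.la; fact)
next
  case (ls x c) show ?case by (subst fmul_smul_left) (rule lin.ls; fact)
qed

definition gdeg :: "gen list \<Rightarrow> nat" where
  "gdeg w = sum_list (map (\<lambda>a. if deg a = 1 then 0 else deg a) w)"

definition SS :: "nat \<Rightarrow> nat \<Rightarrow> gen list set" where
  "SS D G = {w. deg_word w = D \<and> gdeg w = G}"

lemma lin_fmul_SS:
  assumes "x \<in> lin (SS D1 G1)" "y \<in> lin (SS D2 G2)" "D = D1 + D2" "G = G1 + G2"
  shows "fmul x y \<in> lin (SS D G)"
  using lin_fmul[OF assms(1,2)]
  by (rule lin_mono) (auto simp: SS_def deg_word_def gdeg_def assms(3,4))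

lemma lin_comm_SS:
  assumes "x \<in> lin (SS D1 G1)" "y \<in> lin (SS D2 G2)" "D = D1 + D2" "G = G1 + G2"
  shows "comm x y \<in> lin (SS D G)"
  unfolding comm_def
proof (rule lin_minus)
  show "fmul x y \<in> lin (SS D G)" by (rule lin_fmul_SS[OF assms(1,2)]) (use assms in auto)
  show "fmul y x \<in> lin (SS D G)" by (rule lin_fmul_SS[OF assms(2,1)]) (use assms in auto)
qed

lemma lin_qcomm_SS:
  assumes "x \<in> lin (SS D1 G1)" "y \<in> lin (SS D2 G2)" "D = D1 + D2" "G = G1 + G2"
  shows "qcomm q x y \<in> lin (SS D G)"
  unfolding qcomm_def
proof (rule lin_minus; rule lin.ls)
  show "fmul x y \<in> lin (SS D G)" by (rule lin_fmul_SS[OF assms(1,2)]) (use assms in auto)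
  show "fmul y x \<in> lin (SS D G)" by (rule lin_fmul_SS[OF assms(2,1)]) (use assms in auto)
qed

lemma gW0_SS: "gW0 \<in> lin (SS 1 0)"
  unfolding gW0_def by (rule lin.lw) (auto simp: SS_def deg_word_def gdeg_def)
lemma gW1_SS: "gW1 \<in> lin (SS 1 0)"
  unfolding gW1_def by (rule lin.lw) (auto simp: SS_def deg_word_def gdeg_def)
lemma gG_SS: "gG k \<in> lin (SS (2*k+2) (2*k+2))"
  unfolding gG_def by (rule lin.lw) (auto simp: SS_def deg_word_def gdeg_def)

lemma comm_words: "comm (word [a]) (word [b]) = word [a, b] - word [b, a]"
  unfolding comm_def by (simp add: fmul_word_word)

lemma swap_rel:
  assumes "x = W0 \<or> x = W1"
  shows "\<exists>z r. z \<in> lin (SS (2*k+3) (2*k)) \<and> r \<in> rel_ideal q \<and>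
     word [Gt k, x] = word [x, Gt k] + z + r"
proof (cases "k = 0")
  case True
  note k0 = True
  have C: "comm gW0 (qcomm q gW0 gW1) \<in> lin (SS 3 0)"
    by (rule lin_comm_SS[OF gW0_SS lin_qcomm_SS[OF gW0_SS gW1_SS]]) auto
  have C2: "comm (qcomm q gW0 gW1) gW1 \<in> lin (SS 3 0)"
    by (rule lin_comm_SS[OF lin_qcomm_SS[OF gW0_SS gW1_SS] gW1_SS]) auto
  show ?thesis using assms
  proof
    assume x: "x = W0"
    define R where "R = comm gW0 (gG 0) - comm gW0 (qcomm q gW0 gW1)"
    have R: "R \<in> rel_ideal q" unfolding R_def by (rule rel_ideal.gen, rule relator.r3)
    show ?thesis
    proof (intro exI conjI)
      show "smul (-1) (comm gW0 (qcomm q gW0 gW1)) \<in> lin (SS (2*k+3) (2*k))"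
        using C k0 by (auto intro: lin.ls)
      show "smul (-1) R \<in> rel_ideal q" using R by (rule rel_ideal.scale)
      show "word [Gt k, x] = word [x, Gt k] + smul (-1) (comm gW0 (qcomm q gW0 gW1)) + smul (-1) R"
        unfolding R_def x k0 gW0_def gG_def comm_words
        by (simp add: minus_smul[symmetric] algebra_simps)
    qed
  next
    assume x: "x = W1"
    define R where "R = comm (gG 0) gW1 - comm (qcomm q gW0 gW1) gW1"
    have R: "R \<in> rel_ideal q" unfolding R_def by (rule rel_ideal.gen, rule relator.r4)
    show ?thesis
    proof (intro exI conjI)
      show "comm (qcomm q gW0 gW1) gW1 \<in> lin (SS (2*k+3) (2*k))"
        using C2 k0 by auto
      show "R \<in> rel_ideal q" using R .
      show "word [Gt k, x] = word [x, Gt k] + comm (qcomm q gW0 gW1) gW1 + R"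
        unfolding R_def x k0 gW1_def gG_def comm_words
        by (simp add: algebra_simps)
    qed
  qed
next
  case False
  then have k1: "k \<ge> 1" by simp
  define c :: 'a where "c = inverse ((q^2 - inverse q ^ 2)^2)"
  have G: "gG (k - 1) \<in> lin (SS (2*k) (2*k))"
  proof -
    have "2*(k-1)+2 = 2*k" using k1 by simp
    then show ?thesis using gG_SS[of "k - 1"] by simp
  qed
  show ?thesis using assms
  proof
    assume x: "x = W0"
    define T where "T = comm gW0 (qcomm q gW0 (qcomm q gW1 (gG (k - 1))))"
    have T: "T \<in> lin (SS (2*k+3) (2*k))"
      unfolding T_def
      by (rule lin_comm_SS[OF gW0_SS lin_qcomm_SS[OF gW0_SS lin_qcomm_SS[OF gW1_SS G]]]) auto
    define R where "R = comm (gG k) gW0 - smul c T"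
    have R: "R \<in> rel_ideal q" unfolding R_def T_def c_def
      by (rule rel_ideal.gen, rule relator.r5[OF k1])
    show ?thesis
    proof (intro exI conjI)
      show "smul c T \<in> lin (SS (2*k+3) (2*k))" using T by (rule lin.ls)
      show "R \<in> rel_ideal q" using R .
      show "word [Gt k, x] = word [x, Gt k] + smul c T + R"
        unfolding R_def x gW0_def gG_def comm_words
        by (simp add: algebra_simps)
    qed
  next
    assume x: "x = W1"
    define T where "T = comm (qcomm q (qcomm q (gG (k - 1)) gW0) gW1) gW1"
    have T: "T \<in> lin (SS (2*k+3) (2*k))"
      unfolding T_def
      by (rule lin_comm_SS[OF lin_qcomm_SS[OF lin_qcomm_SS[OF G gW0_SS] gW1_SS] gW1_SS]) auto
    define R where "R = comm gW1 (gG k) - smul c T"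
    have R: "R \<in> rel_ideal q" unfolding R_def T_def c_def
      by (rule rel_ideal.gen, rule relator.r6[OF k1])
    show ?thesis
    proof (intro exI conjI)
      show "smul (-1) (smul c T) \<in> lin (SS (2*k+3) (2*k))" using T by (intro lin.ls)
      show "smul (-1) R \<in> rel_ideal q" using R by (rule rel_ideal.scale)
      show "word [Gt k, x] = word [x, Gt k] + smul (-1) (smul c T) + smul (-1) R"
        unfolding R_def x gW1_def gG_def comm_words
        by (simp add: minus_smul[symmetric] algebra_simps)
    qed
  qed
qed

lemma word_span_zero: "0 \<in> word_span S"
  unfolding word_span_def by (rule CollectI, rule exI[of _ "{}"]) (auto simp: zero_fun_def)

lemma word_span_add:
  assumes "x \<in> word_span S" "y \<in> word_span S"
  shows "x + y \<in> word_span S"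
proof -
  obtain T1 c1 where 1: "finite T1" "T1 \<subseteq> S" "x = (\<lambda>u. \<Sum>w\<in>T1. c1 w * word w u)"
    using assms(1) unfolding word_span_def by blast
  obtain T2 c2 where 2: "finite T2" "T2 \<subseteq> S" "y = (\<lambda>u. \<Sum>w\<in>T2. c2 w * word w u)"
    using assms(2) unfolding word_span_def by blast
  define c where "c w = (if w \<in> T1 then c1 w else 0) + (if w \<in> T2 then c2 w else 0)" for w
  have fin: "finite (T1 \<union> T2)" using 1 2 by auto
  have eq: "x + y = (\<lambda>u. \<Sum>w\<in>T1 \<union> T2. c w * word w u)"
  proof
    fix u
    have "(\<Sum>w\<in>T1 \<union> T2. c w * word w u)
        = (\<Sum>w\<in>T1 \<union> T2. (if w \<in> T1 then c1 w * word w u else 0))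
          + (\<Sum>w\<in>T1 \<union> T2. (if w \<in> T2 then c2 w * word w u else 0))"
      unfolding c_def sum.distrib[symmetric] by (rule sum.cong) (auto simp: distrib_right)
    also have "\<dots> = (\<Sum>w\<in>(T1 \<union> T2) \<inter> T1. c1 w * word w u) + (\<Sum>w\<in>(T1 \<union> T2) \<inter> T2. c2 w * word w u)"
      unfolding sum.inter_restrict[OF fin] ..
    also have "\<dots> = x u + y u"
    proof -
      have I: "(T1 \<union> T2) \<inter> T1 = T1" "(T1 \<union> T2) \<inter> T2 = T2" by auto
      show ?thesis unfolding I using 1 2 by simp
    qed
    finally show "(x + y) u = (\<Sum>w\<in>T1 \<union> T2. c w * word w u)" by simp
  qed
  have sub: "T1 \<union> T2 \<subseteq> S" using 1(2) 2(2) by (rule Un_least)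
  show ?thesis unfolding word_span_def by (intro CollectI exI conjI, rule fin, rule sub, rule eq)
qed

lemma word_span_smul:
  assumes "x \<in> word_span S"
  shows "smul a x \<in> word_span S"
proof -
  obtain T c where 1: "finite T" "T \<subseteq> S" "x = (\<lambda>u. \<Sum>w\<in>T. c w * word w u)"
    using assms(1) unfolding word_span_def by blast
  have eq: "smul a x = (\<lambda>u. \<Sum>w\<in>T. (a * c w) * word w u)"
    unfolding 1 smul_def by (auto simp: sum_distrib_left mult.assoc)
  show ?thesis unfolding word_span_def by (intro CollectI exI conjI, rule 1(1), rule 1(2), rule eq)
qed

lemma word_span_word: "w \<in> S \<Longrightarrow> word w \<in> word_span S"
  unfolding word_span_def
  by (rule CollectI, rule exI[of _ "{w}"], rule exI[of _ "\<lambda>_. 1"]) auto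

lemma lin_word_span: "x \<in> lin S \<Longrightarrow> x \<in> word_span S"
proof (induction rule: lin.induct)
  case lz show ?case by (rule word_span_zero)
next
  case (lw s) then show ?case by (rule word_span_word)
next
  case (la x y) show ?case by (rule word_span_add[OF la.IH])
next
  case (ls x c) show ?case by (rule word_span_smul[OF ls.IH])
qed

lemma span_mod_I: "x - y \<in> rel_ideal q \<Longrightarrow> y \<in> span_mod q S \<Longrightarrow> x \<in> span_mod q S"
proof -
  assume a: "x - y \<in> rel_ideal q" "y \<in> span_mod q S"
  from a(2) obtain y0 where "y0 \<in> word_span S" "y - y0 \<in> rel_ideal q" unfolding span_mod_def by blast
  have e: "x - y0 = (x - y) + (y - y0)" by (simp add: algebra_simps)
  have "x - y0 \<in> rel_ideal q" unfolding e by (rule rel_ideal.add; fact)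
  then show ?thesis unfolding span_mod_def using \<open>y0 \<in> word_span S\<close> by blast
qed

lemma span_mod_word_span: "x \<in> word_span S \<Longrightarrow> x \<in> span_mod q S"
proof -
  assume h: "x \<in> word_span S"
  have "x - x = 0" by simp
  then have "x - x \<in> rel_ideal q" using rel_ideal.zero by metis
  then show ?thesis unfolding span_mod_def using h by blast
qed

lemma span_mod_add: "x \<in> span_mod q S \<Longrightarrow> y \<in> span_mod q S \<Longrightarrow> x + y \<in> span_mod q S"
proof -
  assume "x \<in> span_mod q S" "y \<in> span_mod q S"
  then obtain x0 y0 where h: "x0 \<in> word_span S" "x - x0 \<in> rel_ideal q" "y0 \<in> word_span S" "y - y0 \<in> rel_ideal q"
    unfolding span_mod_def by blast
  have e: "(x + y) - (x0 + y0) = (x - x0) + (y - y0)" by (simp add: algebra_simps)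
  have "(x + y) - (x0 + y0) \<in> rel_ideal q" unfolding e by (rule rel_ideal.add; fact)
  moreover have "x0 + y0 \<in> word_span S" by (rule word_span_add; fact)
  ultimately show ?thesis unfolding span_mod_def by blast
qed

lemma span_mod_smul: "x \<in> span_mod q S \<Longrightarrow> smul c x \<in> span_mod q S"
proof -
  assume "x \<in> span_mod q S"
  then obtain x0 where h: "x0 \<in> word_span S" "x - x0 \<in> rel_ideal q"
    unfolding span_mod_def by blast
  have e: "smul c x - smul c x0 = smul c (x - x0)" unfolding smul_def by (auto simp: algebra_simps)
  have "smul c x - smul c x0 \<in> rel_ideal q" unfolding e by (rule rel_ideal.scale; fact)
  moreover have "smul c x0 \<in> word_span S" by (rule word_span_smul; fact)
  ultimately show ?thesis unfolding span_mod_def by blast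
qed

lemma span_mod_plus_I: "x \<in> span_mod q S \<Longrightarrow> r \<in> rel_ideal q \<Longrightarrow> x + r \<in> span_mod q S"
proof -
  assume h: "x \<in> span_mod q S" "r \<in> rel_ideal q"
  have "x + r - x = r" by simp
  then have "x + r - x \<in> rel_ideal q" using h(2) by simp
  then show ?thesis using h(1) by (rule span_mod_I)
qed

lemma lin_span_mod: "x \<in> lin T \<Longrightarrow> (\<And>s. s \<in> T \<Longrightarrow> word s \<in> span_mod q S) \<Longrightarrow> x \<in> span_mod q S"
proof (induction rule: lin.induct)
  case lz
  show ?case by (rule span_mod_word_span, rule word_span_zero)
next
  case (lw s) then show ?case by blast
next
  case (la x y) then show ?case by (blast intro: span_mod_add)
next
  case (ls x c) then show ?case by (blast intro: span_mod_smul)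
qed

fun ninv :: "gen list \<Rightarrow> nat" where
  "ninv [] = 0"
| "ninv (a # w) = (if deg a = 1 then 0 else length (filter (\<lambda>b. deg b = 1) w)) + ninv w"

lemma ninv_append: "ninv (u @ v) = ninv u + ninv v
   + length (filter (\<lambda>b. deg b \<noteq> 1) u) * length (filter (\<lambda>b. deg b = 1) v)"
  by (induction u) (auto simp: algebra_simps)

lemma deg_word_append: "deg_word (u @ v) = deg_word u + deg_word v"
  by (simp add: deg_word_def)
lemma gdeg_append: "gdeg (u @ v) = gdeg u + gdeg v"
  by (simp add: gdeg_def)

lemma word_lin_SS: "word u \<in> lin (SS (deg_word u) (gdeg u))"
  by (rule lin.lw) (simp add: SS_def)

lemma main_lemma:
  fixes q :: "'a::field"
  shows "\<forall>w. gdeg w = g \<longrightarrow> deg_word w \<le> d \<longrightarrow>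
     (word w :: gen list \<Rightarrow> 'a) \<in> span_mod q {w. deg_word w \<le> d \<and> good w}"
proof (induction g rule: less_induct)
  case (less g)
  note outer = less.IH
  have inner: "\<forall>w. ninv w = m \<longrightarrow> gdeg w = g \<longrightarrow> deg_word w \<le> d \<longrightarrow>
     (word w :: gen list \<Rightarrow> 'a) \<in> span_mod q {w. deg_word w \<le> d \<and> good w}" for m
  proof (induction m rule: less_induct)
    case (less m)
    show ?case
    proof (intro allI impI)
      fix w assume h: "ninv w = m" "gdeg w = g" "deg_word w \<le> d"
      show "(word w :: gen list \<Rightarrow> 'a) \<in> span_mod q {w. deg_word w \<le> d \<and> good w}"
      proof (cases "good w")
        case True
        then show ?thesis using h(3) by (intro span_mod_word_span word_span_word) simp
      next
        case False
        then obtain i where i: "1 \<le> i" "i < length w" "deg (w ! i) = 1" "deg (w ! (i - 1)) \<noteq> 1"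
          unfolding good_def by blast
        obtain k where k: "w ! (i - 1) = Gt k" using i(4) by (cases "w ! (i - 1)") auto
        define x where "x = w ! i"
        have x: "x = W0 \<or> x = W1" using i(3) unfolding x_def by (cases "w ! i") auto
        define u where "u = take (i - 1) w"
        define v where "v = drop (i + 1) w"
        have w_eq: "w = u @ [Gt k, x] @ v"
        proof -
          have b: "drop (i - 1) w = w ! (i - 1) # drop i w"
            using i by (metis Cons_nth_drop_Suc Suc_diff_1 le_less_trans less_imp_diff_less less_one linorder_not_le not_one_le_zero)
          have c: "drop i w = w ! i # drop (i + 1) w"
            using i by (simp add: Cons_nth_drop_Suc)
          have e: "drop (i - 1) w = [Gt k, x] @ v"
            unfolding b c k x_def v_def by simp
          have "w = take (i - 1) w @ drop (i - 1) w" by simp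
          from this[unfolded e] show ?thesis unfolding u_def .
        qed
        obtain z r where zr: "z \<in> lin (SS (2*k+3) (2*k))" "r \<in> rel_ideal q"
          "word [Gt k, x] = word [x, Gt k] + z + (r :: gen list \<Rightarrow> 'a)"
          using swap_rel[OF x, of k q] by blast
        have dx: "deg x = 1" "gdeg [x] = 0" using x by (auto simp: gdeg_def)
        have "(word w :: gen list \<Rightarrow> 'a) = fmul (word u) (fmul (word [Gt k, x]) (word v))"
          unfolding w_eq by (simp add: fmul_word_word)
        also have "\<dots> = word (u @ [x, Gt k] @ v) + fmul (word u) (fmul z (word v))
                     + fmul (word u) (fmul r (word v))"
          unfolding zr(3) by (simp add: fmul_add_left fmul_add_right fmul_word_word)
        finally have weq: "(word w :: gen list \<Rightarrow> 'a) = word (u @ [x, Gt k] @ v) + fmul (word u) (fmul z (word v))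
                     + fmul (word u) (fmul r (word v))" .
        have A: "(word (u @ [x, Gt k] @ v) :: gen list \<Rightarrow> 'a) \<in> span_mod q {w. deg_word w \<le> d \<and> good w}"
        proof -
          have "ninv (u @ [x, Gt k] @ v) < m"
            using h(1) dx unfolding w_eq by (simp add: ninv_append)
          moreover have "gdeg (u @ [x, Gt k] @ v) = g" using h(2) unfolding w_eq
            by (simp add: gdeg_append gdeg_def)
          moreover have "deg_word (u @ [x, Gt k] @ v) \<le> d" using h(3) unfolding w_eq
            by (simp add: deg_word_append deg_word_def)
          ultimately show ?thesis using less.IH by blast
        qed
        have gw: "gdeg w = gdeg u + (2*k+2) + gdeg v" unfolding w_eq using dx
          by (simp add: gdeg_append gdeg_def)
        have dw: "deg_word w = deg_word u + (2*k+3) + deg_word v" unfolding w_eq using dx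
          by (simp add: deg_word_append deg_word_def)
        have B: "fmul (word u) (fmul z (word v)) \<in> span_mod q {w. deg_word w \<le> d \<and> good w}"
        proof (rule lin_span_mod)
          show "fmul (word u) (fmul z (word v)) \<in> lin (SS (deg_word w) (gdeg w - 2))"
            by (rule lin_fmul_SS[OF word_lin_SS lin_fmul_SS[OF zr(1) word_lin_SS]]) (use gw dw in auto)
          fix s assume s: "s \<in> SS (deg_word w) (gdeg w - 2)"
          then have "gdeg s < g" "deg_word s \<le> d" using h gw by (auto simp: SS_def)
          then show "(word s :: gen list \<Rightarrow> 'a) \<in> span_mod q {w. deg_word w \<le> d \<and> good w}"
            using outer by blast
        qed
        have C: "fmul (word u) (fmul r (word v)) \<in> rel_ideal q"
          by (rule rel_ideal.lmul, rule rel_ideal.rmul, rule zr(2))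
        show ?thesis unfolding weq
          by (rule span_mod_plus_I[OF span_mod_add[OF A B] C])
      qed
    qed
  qed
  show ?case
  proof (intro allI impI)
    fix w assume "gdeg w = g" "deg_word w \<le> d"
    then show "(word w :: gen list \<Rightarrow> 'a) \<in> span_mod q {w. deg_word w \<le> d \<and> good w}"
      using inner[of "ninv w"] by blast
  qed
qed

lemma word_span_mono: "x \<in> word_span A \<Longrightarrow> A \<subseteq> B \<Longrightarrow> x \<in> word_span B"
  unfolding word_span_def by (smt (verit) mem_Collect_eq order_trans)

lemma span_mod_mono: "x \<in> span_mod q A \<Longrightarrow> A \<subseteq> B \<Longrightarrow> x \<in> span_mod q B"
  unfolding span_mod_def using word_span_mono by blast

theorem proposition9p4:
  fixes q :: "'a::field" and d :: nat
  assumes "q \<noteq> 0" and "\<forall>n::nat. n > 0 \<longrightarrow> q ^ n \<noteq> 1"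
  shows "span_mod q {w. deg_word w \<le> d}
       = span_mod q {w. deg_word w \<le> d \<and> good w}"
proof
  show "span_mod q {w. deg_word w \<le> d \<and> good w} \<subseteq> span_mod q {w. deg_word w \<le> d}"
  proof
    fix x assume "x \<in> span_mod q {w. deg_word w \<le> d \<and> good w}"
    then show "x \<in> span_mod q {w. deg_word w \<le> d}" by (rule span_mod_mono) auto
  qed
next
  show "span_mod q {w. deg_word w \<le> d} \<subseteq> span_mod q {w. deg_word w \<le> d \<and> good w}"
  proof
    fix x assume "x \<in> span_mod q {w. deg_word w \<le> d}"
    then obtain y where y: "y \<in> word_span {w. deg_word w \<le> d}" "x - y \<in> rel_ideal q"
      unfolding span_mod_def by blast
    obtain T c where T: "finite T" "T \<subseteq> {w. deg_word w \<le> d}" "y = (\<lambda>u. \<Sum>w\<in>T. c w * word w u)"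
      using y(1) unfolding word_span_def by blast
    have "y \<in> lin T" unfolding T(3) using T(1)
    proof (induction rule: finite_induct)
      case empty
      have "(\<lambda>u. \<Sum>w\<in>{}. c w * word w u) = (0 :: gen list \<Rightarrow> 'a)" by (simp add: zero_fun_def)
      then show ?case by (simp only:) (rule lin.lz)
    next
      case (insert a F)
      have "(\<lambda>u. \<Sum>w\<in>insert a F. c w * word w u) = smul (c a) (word a) + (\<lambda>u. \<Sum>w\<in>F. c w * word w u)"
      proof
        fix u
        show "(\<Sum>w\<in>insert a F. c w * word w u) = (smul (c a) (word a) + (\<lambda>u. \<Sum>w\<in>F. c w * word w u)) u"
          using insert.hyps by (simp add: smul_def)
      qed
      moreover have "smul (c a) (word a) \<in> lin (insert a F)" by (intro lin.ls lin.lw) simp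
      moreover have "(\<lambda>u. \<Sum>w\<in>F. c w * word w u) \<in> lin (insert a F)"
        using insert(3) by (rule lin_mono) (rule subset_insertI)
      ultimately show ?case by (simp only:) (rule lin.la)
    qed
    have "y \<in> span_mod q {w. deg_word w \<le> d \<and> good w}"
    proof (rule lin_span_mod[OF \<open>y \<in> lin T\<close>])
      fix s assume "s \<in> T"
      then show "word s \<in> span_mod q {w. deg_word w \<le> d \<and> good w}"
      proof -
        have "deg_word s \<le> d" using \<open>s \<in> T\<close> T(2) by auto
        then show ?thesis using main_lemma[of "gdeg s" d q] by blast
      qed
    qed
    then show "x \<in> span_mod q {w. deg_word w \<le> d \<and> good w}"
      using y(2) by (rule span_mod_I[rotated])
  qed
qed

end
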